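(* Let $G=(U,\alpha)$ and $H=(V,\beta)$ be graphs. Then $G$ and $H$ are strongly disjoint if and only if the joining constraint space $\mathcal{N}(G,H)$ has dimension $1$.
   Context: A weight function on finite $U$ is $\alpha:U\times U\to\mathbb{R}$, $\alpha\ge0$, symmetric, summing to $1$; degree $p(u)=\sum_{u'}\alpha(u,u')$; a graph is $G=(U,\alpha)$. Let $S=\{((u,v),(u',v'))\in(U\times V)^2:\alpha(u,u')>0,\ \beta(v,v')>0\}$. The joining constraint space $\mathcal{N}(G,H)$ is the null space of the joining constraint matrix, i.e. the real vector space of functions $\gamma:S\to\mathbb{R}$ (extended by $0$ outside $S$), with $r(u,v)=\sum_{(u',v')}\gamma((u,v),(u',v'))$ and $T=\sum_{(u,v)}r(u,v)$, satisfying the linear equations: $\gamma((u,v),(u',v'))=\gamma((u',v'),(u,v))$; $\sum_v r(u,v)=p(u)T$ for each $u$; $\sum_u r(u,v)=q(v)T$ for each $v$ (where $q$ is the degree of $\beta$); and $p(u)\sum_{y}\gamma((u,v),(u',y))=\alpha(u,u')r(u,v)$, $q(v)\sum_x\gamma((u,v),(x,v'))=\beta(v,v')r(u,v)$ for all $u,u'\in U$, $v,v'\in V$. A weight joining of $\alpha,\beta$ is a weight function $\gamma$ on $U\times V$ satisfying: degree $r$ has marginals $\sum_v r(u,v)=p(u)$, $\sum_u r(u,v)=q(v)$, and the two transition equations above. $G,H$ are strongly disjoint if the only weight joining is $\alpha\otimes\beta$, $(\alpha\otimes\beta)((u,v),(u',v'))=\alpha(u,u')\beta(v,v')$. *)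

theory Defs
  imports "HOL-Analysis.Analysis" "HOL-Library.Function_Algebras"
begin

text \<open>Finite vertex sets are modelled as finite types 'u, 'v (U = UNIV).
  A weight function is a map on pairs.\<close>

definition weight_fun :: "('a::finite \<times> 'a \<Rightarrow> real) \<Rightarrow> bool" where
  "weight_fun \<alpha> \<longleftrightarrow> (\<forall>x y. 0 \<le> \<alpha> (x, y)) \<and> (\<forall>x y. \<alpha> (x, y) = \<alpha> (y, x))
      \<and> (\<Sum>x\<in>UNIV. \<Sum>y\<in>UNIV. \<alpha> (x, y)) = 1"

definition degree :: "('a::finite \<times> 'a \<Rightarrow> real) \<Rightarrow> 'a \<Rightarrow> real" where
  "degree \<alpha> u = (\<Sum>u'\<in>UNIV. \<alpha> (u, u'))"

definition tensor :: "('u \<times> 'u \<Rightarrow> real) \<Rightarrow> ('v \<times> 'v \<Rightarrow> real)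
    \<Rightarrow> ('u \<times> 'v) \<times> ('u \<times> 'v) \<Rightarrow> real" where
  "tensor \<alpha> \<beta> = (\<lambda>((u, v), (u', v')). \<alpha> (u, u') * \<beta> (v, v'))"

definition transition_eqs :: "('u::finite \<times> 'u \<Rightarrow> real) \<Rightarrow> ('v::finite \<times> 'v \<Rightarrow> real)
    \<Rightarrow> (('u \<times> 'v) \<times> ('u \<times> 'v) \<Rightarrow> real) \<Rightarrow> bool" where
  "transition_eqs \<alpha> \<beta> \<gamma> \<longleftrightarrow>
     (\<forall>u v u'. degree \<alpha> u * (\<Sum>y\<in>UNIV. \<gamma> ((u, v), (u', y))) = \<alpha> (u, u') * degree \<gamma> (u, v)) \<and>
     (\<forall>u v v'. degree \<beta> v * (\<Sum>x\<in>UNIV. \<gamma> ((u, v), (x, v'))) = \<beta> (v, v') * degree \<gamma> (u, v))"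

definition weight_joining :: "('u::finite \<times> 'u \<Rightarrow> real) \<Rightarrow> ('v::finite \<times> 'v \<Rightarrow> real)
    \<Rightarrow> (('u \<times> 'v) \<times> ('u \<times> 'v) \<Rightarrow> real) \<Rightarrow> bool" where
  "weight_joining \<alpha> \<beta> \<gamma> \<longleftrightarrow> weight_fun \<gamma> \<and>
     (\<forall>u. (\<Sum>v\<in>UNIV. degree \<gamma> (u, v)) = degree \<alpha> u) \<and>
     (\<forall>v. (\<Sum>u\<in>UNIV. degree \<gamma> (u, v)) = degree \<beta> v) \<and>
     transition_eqs \<alpha> \<beta> \<gamma>"

definition strongly_disjoint :: "('u::finite \<times> 'u \<Rightarrow> real) \<Rightarrow> ('v::finite \<times> 'v \<Rightarrow> real) \<Rightarrow> bool" where
  "strongly_disjoint \<alpha> \<beta> \<longleftrightarrow> (\<forall>\<gamma>. weight_joining \<alpha> \<beta> \<gamma> \<longrightarrow> \<gamma> = tensor \<alpha> \<beta>)"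

definition supp_S :: "('u \<times> 'u \<Rightarrow> real) \<Rightarrow> ('v \<times> 'v \<Rightarrow> real) \<Rightarrow> (('u \<times> 'v) \<times> ('u \<times> 'v)) set" where
  "supp_S \<alpha> \<beta> = {((u, v), (u', v')). \<alpha> (u, u') > 0 \<and> \<beta> (v, v') > 0}"

text \<open>Joining constraint space: functions on S (extended by 0) satisfying the
  homogeneous linear equations, with T the total degree.\<close>
definition joining_constraint_space :: "('u::finite \<times> 'u \<Rightarrow> real) \<Rightarrow> ('v::finite \<times> 'v \<Rightarrow> real)
    \<Rightarrow> (('u \<times> 'v) \<times> ('u \<times> 'v) \<Rightarrow> real) set" where
  "joining_constraint_space \<alpha> \<beta> = {\<gamma>.
     (\<forall>z. z \<notin> supp_S \<alpha> \<beta> \<longrightarrow> \<gamma> z = 0) \<and>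
     (\<forall>x y. \<gamma> (x, y) = \<gamma> (y, x)) \<and>
     (let T = (\<Sum>w\<in>UNIV. degree \<gamma> w) in
       (\<forall>u. (\<Sum>v\<in>UNIV. degree \<gamma> (u, v)) = degree \<alpha> u * T) \<and>
       (\<forall>v. (\<Sum>u\<in>UNIV. degree \<gamma> (u, v)) = degree \<beta> v * T)) \<and>
     transition_eqs \<alpha> \<beta> \<gamma>}"

definition fun_dim :: "('a \<Rightarrow> real) set \<Rightarrow> nat" where
  "fun_dim N = vector_space.dim (\<lambda>c (f::'a \<Rightarrow> real) x. c * f x) N"

end

theory Submission
  imports Defs
begin

interpretation fv: vector_space "\<lambda>c (f::'a\<Rightarrow>real) x. c * f x"
  by unfold_locales (auto simp: algebra_simps fun_eq_iff)

definition tot :: "(('a::finite) \<times> 'a \<Rightarrow> real) \<Rightarrow> real" where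
  "tot g = (\<Sum>w\<in>UNIV. degree g w)"

lemma degree_lc: "degree (\<lambda>z. a * f z + b * g z) w = a * degree f w + b * degree g w"
  by (simp add: degree_def sum.distrib sum_distrib_left)

lemma tot_lc: "tot (\<lambda>z. a * f z + b * g z) = a * tot f + b * tot g"
  by (simp add: tot_def degree_lc sum.distrib sum_distrib_left)

lemma sum_prod_UNIV: "(\<Sum>z\<in>(UNIV::('a::finite\<times>'b::finite) set). f z) = (\<Sum>a\<in>UNIV. \<Sum>b\<in>UNIV. f (a,b))"
  by (simp add: sum.cartesian_product flip: UNIV_Times_UNIV)

lemma wf_tot: "weight_fun g \<Longrightarrow> tot g = 1"
  unfolding weight_fun_def tot_def degree_def by simp

lemma N_lc:
  assumes "f \<in> joining_constraint_space \<alpha> \<beta>" "g \<in> joining_constraint_space \<alpha> \<beta>"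
  shows "(\<lambda>z. a * f z + b * g z) \<in> joining_constraint_space \<alpha> \<beta>"
proof -
  have tf: "tot f = (\<Sum>w\<in>UNIV. degree f w)" "tot g = (\<Sum>w\<in>UNIV. degree g w)" by (simp_all add: tot_def)
  have tl: "(\<Sum>w\<in>UNIV. degree (\<lambda>z. a * f z + b * g z) w) = a * tot f + b * tot g"
    using tot_lc unfolding tot_def .
  show ?thesis using assms
    unfolding joining_constraint_space_def transition_eqs_def Let_def tl
    unfolding tf[symmetric]
    by (auto simp: degree_lc sum.distrib sum_distrib_left[symmetric] algebra_simps)
qed

lemma tensor_deg:
  "degree (tensor \<alpha> \<beta>) (u, v) = degree \<alpha> u * degree \<beta> v"
  unfolding degree_def tensor_def
  by (simp add: sum_prod_UNIV sum_product)

lemma tensor_tot: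
  assumes "weight_fun \<alpha>" "weight_fun \<beta>"
  shows "tot (tensor \<alpha> \<beta>) = 1"
proof -
  have "tot (tensor \<alpha> \<beta>) = (\<Sum>u\<in>UNIV. degree \<alpha> u) * (\<Sum>v\<in>UNIV. degree \<beta> v)"
    unfolding tot_def by (simp add: sum_prod_UNIV tensor_deg sum_product)
  also have "\<dots> = 1" using assms unfolding weight_fun_def degree_def by simp
  finally show ?thesis .
qed

lemma tensor_N:
  assumes "weight_fun \<alpha>" "weight_fun \<beta>"
  shows "tensor \<alpha> \<beta> \<in> joining_constraint_space \<alpha> \<beta>"
proof -
  have T: "(\<Sum>w\<in>UNIV. degree (tensor \<alpha> \<beta>) w) = 1" using tensor_tot[OF assms] by (simp add: tot_def)
  have sa: "(\<Sum>u\<in>UNIV. degree \<alpha> u) = 1" "(\<Sum>v\<in>UNIV. degree \<beta> v) = 1"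
    using assms unfolding weight_fun_def degree_def by simp_all
  have sym: "\<alpha> (x, y) = \<alpha> (y, x)" "\<beta> (x', y') = \<beta> (y', x')" for x y x' y'
    using assms unfolding weight_fun_def by auto
  have nn: "0 \<le> \<alpha> (x, y)" "0 \<le> \<beta> (x', y')" for x y x' y'
    using assms unfolding weight_fun_def by auto
  have supp: "tensor \<alpha> \<beta> z = 0" if "z \<notin> supp_S \<alpha> \<beta>" for z
  proof -
    obtain u v u' v' where z: "z = ((u,v),(u',v'))" by (metis prod.exhaust)
    from that z nn(1)[of u u'] nn(2)[of v v'] have "\<alpha> (u,u') = 0 \<or> \<beta> (v,v') = 0"
      unfolding supp_S_def by auto
    then show ?thesis by (auto simp: z tensor_def)
  qed
  have m1: "(\<Sum>v\<in>UNIV. degree (tensor \<alpha> \<beta>) (u, v)) = degree \<alpha> u * 1" for u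
    by (simp add: tensor_deg sum_distrib_left[symmetric] sa)
  have m2: "(\<Sum>u\<in>UNIV. degree (tensor \<alpha> \<beta>) (u, v)) = degree \<beta> v * 1" for v
    by (simp add: tensor_deg sum_distrib_right[symmetric] sa)
  have t1: "degree \<alpha> u * (\<Sum>y\<in>UNIV. tensor \<alpha> \<beta> ((u, v), (u', y))) = \<alpha> (u, u') * degree (tensor \<alpha> \<beta>) (u, v)" for u v u'
    unfolding tensor_deg by (simp add: tensor_def degree_def[of \<beta> v] sum_distrib_left[symmetric])
  have t2: "degree \<beta> v * (\<Sum>x\<in>UNIV. tensor \<alpha> \<beta> ((u, v), (x, v'))) = \<beta> (v, v') * degree (tensor \<alpha> \<beta>) (u, v)" for u v v'
    unfolding tensor_deg by (simp add: tensor_def degree_def[of \<alpha> u] sum_distrib_right[symmetric])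
  have sy: "tensor \<alpha> \<beta> (x, y) = tensor \<alpha> \<beta> (y, x)" for x y
    by (cases x; cases y) (simp add: tensor_def sym)
  show ?thesis
    unfolding joining_constraint_space_def transition_eqs_def Let_def T
    using supp m1 m2 t1 t2 sy T by auto
qed

lemma deg_nonneg: "(\<And>z. 0 \<le> g z) \<Longrightarrow> 0 \<le> degree g w"
  unfolding degree_def by (simp add: sum_nonneg)

lemma wj_N:
  assumes wa: "weight_fun \<alpha>" and wb: "weight_fun \<beta>" and wj: "weight_joining \<alpha> \<beta> \<gamma>"
  shows "\<gamma> \<in> joining_constraint_space \<alpha> \<beta>" "tot \<gamma> = 1"
proof -
  have wg: "weight_fun \<gamma>" and mu: "\<And>u. (\<Sum>v\<in>UNIV. degree \<gamma> (u, v)) = degree \<alpha> u"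
    and mv: "\<And>v. (\<Sum>u\<in>UNIV. degree \<gamma> (u, v)) = degree \<beta> v"
    and tr1: "\<And>u v u'. degree \<alpha> u * (\<Sum>y\<in>UNIV. \<gamma> ((u, v), (u', y))) = \<alpha> (u, u') * degree \<gamma> (u, v)"
    and tr2: "\<And>u v v'. degree \<beta> v * (\<Sum>x\<in>UNIV. \<gamma> ((u, v), (x, v'))) = \<beta> (v, v') * degree \<gamma> (u, v)"
    using wj unfolding weight_joining_def transition_eqs_def by auto
  show T: "tot \<gamma> = 1" using wf_tot[OF wg] .
  have gnn: "\<And>z. 0 \<le> \<gamma> z" using wg unfolding weight_fun_def by auto
  have gsym: "\<And>x y. \<gamma> (x, y) = \<gamma> (y, x)" using wg unfolding weight_fun_def by auto
  have ann: "\<And>x y. 0 \<le> \<alpha> (x, y)" using wa unfolding weight_fun_def by auto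
  have bnn: "\<And>x y. 0 \<le> \<beta> (x, y)" using wb unfolding weight_fun_def by auto
  have rnn: "\<And>w. 0 \<le> degree \<gamma> w" using deg_nonneg gnn by blast
  have zero_row: "\<gamma> ((u,v), w) = 0" if "degree \<gamma> (u,v) = 0" for u v w
  proof -
    have "(\<Sum>w\<in>UNIV. \<gamma> ((u,v), w)) = 0" using that by (simp add: degree_def)
    then have "\<forall>w. \<gamma> ((u,v), w) = 0" using gnn by (simp add: sum_nonneg_eq_0_iff)
    then show ?thesis by blast
  qed
  have supp: "\<gamma> z = 0" if "z \<notin> supp_S \<alpha> \<beta>" for z
  proof -
    obtain u v u' v' where z: "z = ((u,v),(u',v'))" by (metis prod.exhaust)
    from that z ann[of u u'] bnn[of v v'] have "\<alpha> (u,u') = 0 \<or> \<beta> (v,v') = 0"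
      unfolding supp_S_def by auto
    then show ?thesis
    proof
      assume a0: "\<alpha> (u,u') = 0"
      show ?thesis
      proof (cases "degree \<alpha> u = 0")
        case True
        then have "(\<Sum>v\<in>UNIV. degree \<gamma> (u, v)) = 0" using mu by simp
        then have "degree \<gamma> (u,v) = 0" using rnn by (simp add: sum_nonneg_eq_0_iff)
        then show ?thesis using zero_row z by simp
      next
        case False
        then have "(\<Sum>y\<in>UNIV. \<gamma> ((u, v), (u', y))) = 0" using tr1[of u v u'] a0 by simp
        then show ?thesis using gnn z by (simp add: sum_nonneg_eq_0_iff)
      qed
    next
      assume b0: "\<beta> (v,v') = 0"
      show ?thesis
      proof (cases "degree \<beta> v = 0")
        case True
        then have "(\<Sum>u\<in>UNIV. degree \<gamma> (u, v)) = 0" using mv by simp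
        then have "degree \<gamma> (u,v) = 0" using rnn by (simp add: sum_nonneg_eq_0_iff)
        then show ?thesis using zero_row z by simp
      next
        case False
        then have "(\<Sum>x\<in>UNIV. \<gamma> ((u, v), (x, v'))) = 0" using tr2[of v u v'] b0 by simp
        then show ?thesis using gnn z by (simp add: sum_nonneg_eq_0_iff)
      qed
    qed
  qed
  have T': "(\<Sum>w\<in>UNIV. degree \<gamma> w) = 1" using T by (simp add: tot_def)
  show "\<gamma> \<in> joining_constraint_space \<alpha> \<beta>"
    unfolding joining_constraint_space_def Let_def
    using supp gsym mu mv T' wj unfolding weight_joining_def by auto
qed

lemma N_wj:
  assumes N: "\<gamma> \<in> joining_constraint_space \<alpha> \<beta>" and nn: "\<And>z. 0 \<le> \<gamma> z" and T: "tot \<gamma> = 1"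
  shows "weight_joining \<alpha> \<beta> \<gamma>"
proof -
  have T': "(\<Sum>w\<in>UNIV. degree \<gamma> w) = 1" using T by (simp add: tot_def)
  have s: "(\<Sum>x\<in>UNIV. \<Sum>y\<in>UNIV. \<gamma> (x, y)) = 1" using T' by (simp add: degree_def)
  show ?thesis using N nn s T' unfolding weight_joining_def weight_fun_def joining_constraint_space_def Let_def
    by auto
qed

lemma tot_scale: "tot (\<lambda>x. k * f x) = k * tot f"
  using tot_lc[of k f 0 f] by simp

lemma fwd:
  assumes wa: "weight_fun \<alpha>" and wb: "weight_fun \<beta>" and sd: "strongly_disjoint \<alpha> \<beta>"
    and g: "\<gamma> \<in> joining_constraint_space \<alpha> \<beta>"
  shows "\<gamma> = (\<lambda>z. tot \<gamma> * tensor \<alpha> \<beta> z)"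
proof -
  define t where "t = tensor \<alpha> \<beta>"
  have tN: "t \<in> joining_constraint_space \<alpha> \<beta>" using tensor_N[OF wa wb] by (simp add: t_def)
  have tt: "tot t = 1" using tensor_tot[OF wa wb] by (simp add: t_def)
  have ann: "\<And>x y. 0 \<le> \<alpha> (x, y)" using wa unfolding weight_fun_def by auto
  have bnn: "\<And>x y. 0 \<le> \<beta> (x, y)" using wb unfolding weight_fun_def by auto
  have tnn: "0 \<le> t z" for z
    by (cases z) (auto simp: t_def tensor_def intro!: mult_nonneg_nonneg ann bnn)
  have gz: "\<gamma> z = 0" if "t z = 0" for z
  proof -
    obtain u v u' v' where z: "z = ((u,v),(u',v'))" by (metis prod.exhaust)
    have "z \<notin> supp_S \<alpha> \<beta>" using that by (auto simp: z t_def tensor_def supp_S_def)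
    moreover have "\<forall>z. z \<notin> supp_S \<alpha> \<beta> \<longrightarrow> \<gamma> z = 0" using g unfolding joining_constraint_space_def by blast
    ultimately show ?thesis by blast
  qed
  define K where "K = (\<Sum>z\<in>UNIV. \<bar>\<gamma> z\<bar> / t z) + \<bar>tot \<gamma>\<bar> + 1"
  have S0: "0 \<le> (\<Sum>z\<in>UNIV. \<bar>\<gamma> z\<bar> / t z)" by (intro sum_nonneg) (simp add: tnn)
  have Kpos: "K > 0" and KT: "\<bar>tot \<gamma>\<bar> < K" using S0 by (auto simp: K_def)
  have bound: "\<bar>\<gamma> z\<bar> \<le> K * t z" for z
  proof (cases "t z = 0")
    case True then show ?thesis using gz by simp
  next
    case False
    then have tp: "t z > 0" using tnn[of z] by simp
    have "\<bar>\<gamma> z\<bar> / t z \<le> (\<Sum>z\<in>UNIV. \<bar>\<gamma> z\<bar> / t z)"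
      by (rule member_le_sum) (auto simp: tnn)
    also have "\<dots> \<le> K" by (simp add: K_def)
    finally show ?thesis using tp by (simp add: divide_le_eq)
  qed
  define e where "e = 1 / (2 * K)"
  have ep: "e > 0" using Kpos by (simp add: e_def)
  define g1 where "g1 = (\<lambda>z. 1 * t z + e * \<gamma> z)"
  have g1N: "g1 \<in> joining_constraint_space \<alpha> \<beta>" unfolding g1_def by (rule N_lc[OF tN g])
  have g1t: "tot g1 = 1 + e * tot \<gamma>" unfolding g1_def tot_lc tt by simp
  have "\<bar>e * tot \<gamma>\<bar> < 1/2"
  proof -
    have "\<bar>e * tot \<gamma>\<bar> = \<bar>tot \<gamma>\<bar> / (2*K)" using Kpos by (simp add: e_def abs_mult)
    also have "\<dots> < K / (2*K)" using KT Kpos by (simp add: divide_strict_right_mono)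
    also have "\<dots> = 1/2" using Kpos by simp
    finally show ?thesis .
  qed
  then have g1tp: "tot g1 > 0" using g1t by linarith
  have g1nn: "0 \<le> g1 z" for z
  proof -
    have "e * \<bar>\<gamma> z\<bar> \<le> e * (K * t z)" using bound[of z] ep by (simp add: mult_left_mono)
    also have "\<dots> = t z / 2" using Kpos by (simp add: e_def)
    finally have "e * \<bar>\<gamma> z\<bar> \<le> t z / 2" .
    moreover have "- (e * \<bar>\<gamma> z\<bar>) \<le> e * \<gamma> z" using ep mult_left_mono[of "- \<bar>\<gamma> z\<bar>" "\<gamma> z" e] by simp
    ultimately show ?thesis using tnn[of z] by (simp add: g1_def)
  qed
  define g2 where "g2 = (\<lambda>z. (1 / tot g1) * g1 z + 0 * g1 z)"
  have g2N: "g2 \<in> joining_constraint_space \<alpha> \<beta>" unfolding g2_def by (rule N_lc[OF g1N g1N])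
  have g2t: "tot g2 = 1" unfolding g2_def tot_lc using g1tp by simp
  have g2nn: "0 \<le> g2 z" for z using g1nn[of z] g1tp by (simp add: g2_def)
  have g2t_eq: "g2 = t" using sd N_wj[OF g2N g2nn g2t] unfolding strongly_disjoint_def t_def by blast
  have "g1 z / tot g1 = t z" for z using fun_cong[OF g2t_eq, of z] by (simp add: g2_def)
  then have h1: "g1 z = tot g1 * t z" for z using g1tp by (simp add: divide_eq_eq mult.commute)
  have "t z + e * \<gamma> z = (1 + e * tot \<gamma>) * t z" for z
    using h1[of z] unfolding g1t by (simp add: g1_def)
  then have "e * \<gamma> z = e * (tot \<gamma> * t z)" for z
    by (simp add: algebra_simps)
  then have "\<gamma> z = tot \<gamma> * t z" for z using ep by simp
  then show ?thesis by (auto simp: t_def)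
qed

theorem proposition5p4:
  fixes \<alpha> :: "'u::finite \<times> 'u \<Rightarrow> real" and \<beta> :: "'v::finite \<times> 'v \<Rightarrow> real"
  assumes "weight_fun \<alpha>" and "weight_fun \<beta>"
  shows "strongly_disjoint \<alpha> \<beta> \<longleftrightarrow> fun_dim (joining_constraint_space \<alpha> \<beta>) = 1"
proof -
  let ?N = "joining_constraint_space \<alpha> \<beta>"
  let ?t = "tensor \<alpha> \<beta>"
  have dimeq: "fun_dim ?N = fv.dim ?N" unfolding fun_dim_def ..
  have tN: "?t \<in> ?N" using tensor_N[OF assms] .
  have tt: "tot ?t = 1" using tensor_tot[OF assms] .
  have tnz: "?t \<noteq> 0"
  proof
    assume "?t = 0"
    then have "tot ?t = 0" by (simp add: tot_def degree_def)
    with tt show False by simp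
  qed
  show ?thesis
  proof
    assume sd: "strongly_disjoint \<alpha> \<beta>"
    have "fv.dim ?N = 1"
    proof (rule fv.dim_unique[of "{?t}"])
      show "{?t} \<subseteq> ?N" using tN by simp
      show "?N \<subseteq> fv.span {?t}"
      proof
        fix g assume "g \<in> ?N"
        then have "g = (\<lambda>z. tot g * ?t z)" using fwd[OF assms sd] by blast
        then show "g \<in> fv.span {?t}" unfolding fv.span_singleton by blast
      qed
      show "fv.independent {?t}" using tnz by (simp add: fv.independent_insert fv.span_empty)
      show "card {?t} = 1" by simp
    qed
    then show "fun_dim ?N = 1" using dimeq by simp
  next
    assume d: "fun_dim ?N = 1"
    show "strongly_disjoint \<alpha> \<beta>" unfolding strongly_disjoint_def
    proof (intro allI impI)
      fix \<gamma> assume wj: "weight_joining \<alpha> \<beta> \<gamma>"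
      have gN: "\<gamma> \<in> ?N" and gt: "tot \<gamma> = 1" using wj_N[OF assms wj] by auto
      obtain B where B: "B \<subseteq> ?N" "fv.independent B" "?N \<subseteq> fv.span B" "card B = fv.dim ?N"
        by (rule fv.basis_exists)
      then have "card B = 1" using d dimeq by simp
      then obtain b where Bb: "B = {b}" by (rule card_1_singletonE)
      obtain k1 where k1: "?t = (\<lambda>x. k1 * b x)" using B(3) tN unfolding Bb fv.span_singleton by blast
      obtain k2 where k2: "\<gamma> = (\<lambda>x. k2 * b x)" using B(3) gN unfolding Bb fv.span_singleton by blast
      have "k1 * tot b = 1" using tt unfolding k1 tot_scale .
      moreover have "k2 * tot b = 1" using gt unfolding k2 tot_scale .
      ultimately have "k1 = k2" by (metis mult_cancel_right mult_zero_right zero_neq_one)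
      then show "\<gamma> = ?t" using k1 k2 by simp
    qed
  qed
qed

end
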